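(* Let $T$ be a code tree for $\mathcal S$ as in the context, with $1/2\le P_R<1$, let $N\ge 2$ and $k=\lceil \lg N\rceil$, and let $L^{(\mathrm I)}_N$ be the average code length of the Type-I AEDS with $N$ states built on $T$. Then $$L_T-L^{(\mathrm I)}_N=\frac{1-P_R^{N-1}}{1-P_R^{N}}\,P_R+\frac{1-P_R^{\,2^k-N}}{1-P_R^{N}}\,(1-P_R)-k(1-P_R),$$ so the reduction $\delta^{(\mathrm I)}_N(P_R):=[L_T-L^{(\mathrm I)}_N]_0$ equals the positive part of this expression, where $[u]_0=\max\{u,0\}$. In particular $\delta^{(\mathrm I)}_2(P_R)=\left[\frac{P_R^2+P_R-1}{1+P_R}\right]_0$, which is positive whenever $P_R>\omega^{(\mathrm I)}:=(\sqrt5-1)/2\approx0.6180$.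
   Context: Let $\mathcal S$ be a finite alphabet with $|\mathcal S|\ge 2$ and $p=\{p(s)\}_{s\in\mathcal S}$ a probability distribution with $p(s)>0$ for all $s$ (symbols are i.i.d. with law $p$). Let $\mathcal B=\{0,1\}^*$ be the set of finite binary words (including the empty word), $l(\beta)$ the length of $\beta$, and $\lg=\log_2$. An AEDS (asymmetric encoding–decoding scheme) with finite state set $\mathcal X$, $|\mathcal X|=N$, consists of maps $E_{\hat x}:\mathcal S\to\mathcal B$ and $F^-_{\hat x}:\mathcal S\to\mathcal X$ for each $\hat x\in\mathcal X$ such that, for every $x\in\mathcal X$, the words $E_{\hat x}(s)$ over all pairs $(\hat x,s)$ with $F^-_{\hat x}(s)=x$ are pairwise distinct and form a prefix-free set $\mathcal B^{(D)}_x$. (A sequence is encoded backward: from state $\hat x_t$ output $E_{\hat x_t}(s_t)$ and move to $F^-_{\hat x_t}(s_t)$.) The state chain is the Markov chain on $\mathcal X$ moving from $\hat x$ to $F^-_{\hat x}(s)$ with probability $p(s)$. For a stationary distribution $Q$ of this chain (unique when the chain is irreducible), the average code length is $L=\sum_{\hat x\in\mathcal X}\sum_{s\in\mathcal S}p(s)Q(\hat x)\,l(E_{\hat x}(s))$. Code tree: $T$ is a binary prefix-free code for $\mathcal S$ with codeword $c_T(s)$ of length $l_T(s)\ge1$, and $L_T=\sum_s p(s)l_T(s)$. $\mathcal S_R$ (resp. $\mathcal S_L$) is the set of symbols whose codeword starts in the right (resp. left) subtree of the root; both are assumed nonempty; $P_R=\sum_{s\in\mathcal S_R}p(s)$, $P_L=1-P_R$,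 labeled so that $P_R\ge 1/2$. For $s\in\mathcal S_R$ (resp. $\mathcal S_L$), $t_R(s)$ (resp. $t_L(s)$) is $c_T(s)$ with its first bit deleted. Type-I AEDS with $N\ge2$ states $\alpha_1,\dots,\alpha_N$ built on $T$: let $k=\lceil\lg N\rceil$ and let $\pi_1,\dots,\pi_N$ be a prefix-free set of binary words with $l(\pi_j)=k-1$ for $1\le j\le 2^k-N$ and $l(\pi_j)=k$ for $2^k-N<j\le N$. For $s\in\mathcal S_R$: $F^-_{\alpha_j}(s)=\alpha_{j+1}$, $E_{\alpha_j}(s)=t_R(s)$ for $1\le j\le N-1$, and $F^-_{\alpha_N}(s)=\alpha_1$, $E_{\alpha_N}(s)=0\,t_R(s)$. For $s\in\mathcal S_L$ and every $j$: $F^-_{\alpha_j}(s)=\alpha_1$, $E_{\alpha_j}(s)=1\,\pi_j\,t_L(s)$ (concatenation). Its state chain is irreducible and aperiodic, so $Q$ is unique. *)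

theory Defs
  imports Complex_Main "HOL-Library.Sublist"
begin

text \<open>Binary words are \<open>bool list\<close>; bit 0 is False, bit 1 is True.
 A code tree for the alphabet (a finite type 's) is a map c :: 's \<Rightarrow> bool list,
 prefix-free, with all codewords of length at least 1.  The bit \<open>rb\<close> marks the
 right subtree of the root: S_R = {s. hd (c s) = rb}, S_L = its complement.\<close>

definition code_tree :: "('s \<Rightarrow> bool list) \<Rightarrow> bool" where
  "code_tree c \<longleftrightarrow> (\<forall>s. length (c s) \<ge> 1) \<and>
     (\<forall>s t. s \<noteq> t \<longrightarrow> \<not> prefix (c s) (c t))"

definition S_R :: "('s \<Rightarrow> bool list) \<Rightarrow> bool \<Rightarrow> 's set" where
  "S_R c rb = {s. hd (c s) = rb}"

definition S_L :: "('s \<Rightarrow> bool list) \<Rightarrow> bool \<Rightarrow> 's set" where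
  "S_L c rb = {s. hd (c s) \<noteq> rb}"

definition P_R :: "('s::finite \<Rightarrow> real) \<Rightarrow> ('s \<Rightarrow> bool list) \<Rightarrow> bool \<Rightarrow> real" where
  "P_R p c rb = (\<Sum>s\<in>S_R c rb. p s)"

definition L_T :: "('s::finite \<Rightarrow> real) \<Rightarrow> ('s \<Rightarrow> bool list) \<Rightarrow> real" where
  "L_T p c = (\<Sum>s\<in>UNIV. p s * real (length (c s)))"

definition kN :: "nat \<Rightarrow> nat" where
  "kN N = nat \<lceil>log 2 (real N)\<rceil>"

definition admissible_pi :: "nat \<Rightarrow> (nat \<Rightarrow> bool list) \<Rightarrow> bool" where
  "admissible_pi N \<pi> \<longleftrightarrow>
     (\<forall>i\<in>{1..N}. \<forall>j\<in>{1..N}. i \<noteq> j \<longrightarrow> \<not> prefix (\<pi> i) (\<pi> j)) \<and>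
     (\<forall>j\<in>{1..N}. length (\<pi> j) = (if j \<le> 2 ^ kN N - N then kN N - 1 else kN N))"

text \<open>Type-I AEDS on states alpha_1..alpha_N, represented by the indices 1..N.\<close>
definition typeI_E :: "nat \<Rightarrow> (nat \<Rightarrow> bool list) \<Rightarrow> ('s \<Rightarrow> bool list) \<Rightarrow> bool
    \<Rightarrow> nat \<Rightarrow> 's \<Rightarrow> bool list" where
  "typeI_E N \<pi> c rb j s =
     (if s \<in> S_R c rb then (if j < N then tl (c s) else False # tl (c s))
      else True # \<pi> j @ tl (c s))"

definition typeI_F :: "nat \<Rightarrow> ('s \<Rightarrow> bool list) \<Rightarrow> bool \<Rightarrow> nat \<Rightarrow> 's \<Rightarrow> nat" where
  "typeI_F N c rb j s =
     (if s \<in> S_R c rb then (if j < N then j + 1 else 1) else 1)"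

text \<open>Stationary distribution of the state chain (moving from x to F x s with prob. p s).\<close>
definition stationary :: "nat \<Rightarrow> ('s::finite \<Rightarrow> real) \<Rightarrow> (nat \<Rightarrow> 's \<Rightarrow> nat)
    \<Rightarrow> (nat \<Rightarrow> real) \<Rightarrow> bool" where
  "stationary N p F Q \<longleftrightarrow>
     (\<forall>x\<in>{1..N}. Q x \<ge> 0) \<and> (\<Sum>x=1..N. Q x) = 1 \<and>
     (\<forall>y\<in>{1..N}. Q y = (\<Sum>x=1..N. Q x * (\<Sum>s\<in>{s. F x s = y}. p s)))"

definition avg_len :: "nat \<Rightarrow> ('s::finite \<Rightarrow> real) \<Rightarrow> (nat \<Rightarrow> 's \<Rightarrow> bool list)
    \<Rightarrow> (nat \<Rightarrow> real) \<Rightarrow> real" where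
  "avg_len N p E Q = (\<Sum>x=1..N. \<Sum>s\<in>UNIV. p s * Q x * real (length (E x s)))"

end

theory Submission
  imports Defs
begin

lemma shift_sum: "(\<Sum>x=1..n. (g::nat\<Rightarrow>real) (x - 1)) = (\<Sum>i<n. g i)"
  by (induction n) (auto simp: sum.cl_ivl_Suc)

lemma alg: fixes r a b k :: real assumes "r < 1" "r * a < 1"
  shows "r * (1 - a * ((1 - r) / (1 - r * a))) - (1 - r) * (k - (1 - r) / (1 - r * a) * ((1 - b) / (1 - r)))
   = (1 - a) / (1 - r * a) * r + (1 - b) / (1 - r * a) * (1 - r) - k * (1 - r)"
proof -
  have h1: "1 - r \<noteq> 0" "1 - r * a \<noteq> 0" using assms by auto
  have e1: "(1 - r) / (1 - r * a) * ((1 - b) / (1 - r)) = (1 - b) / (1 - r * a)" using h1 by simp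
  have "1 - a * ((1 - r) / (1 - r * a)) = ((1 - r * a) - a * (1 - r)) / (1 - r * a)"
    using h1 by (simp add: field_simps)
  also have "(1 - r * a) - a * (1 - r) = 1 - a" by (simp add: algebra_simps)
  finally have e2: "1 - a * ((1 - r) / (1 - r * a)) = (1 - a) / (1 - r * a)" .
  show ?thesis unfolding e1 e2 by (simp add: algebra_simps)
qed

lemma main:
  fixes p :: "'a::finite \<Rightarrow> real" and c :: "'a \<Rightarrow> bool list" and rb :: bool
    and N :: nat and \<pi> :: "nat \<Rightarrow> bool list" and Q :: "nat \<Rightarrow> real"
  assumes pos: "\<forall>s. p s > 0" and p1: "(\<Sum>s\<in>UNIV. p s) = 1"
    and ct: "code_tree c"
    and ne: "S_R c rb \<noteq> {}" 
    and rlt: "P_R p c rb < 1"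
    and N2: "N \<ge> 2"
    and stat: "stationary N p (typeI_F N c rb) Q"
    and k1: "k \<ge> 1" and kdef: "k = kN N" and MN: "M \<le> N" and Mdef: "M = 2 ^ k - N"
    and adm: "\<forall>j\<in>{1..N}. length (\<pi> j) = (if j \<le> M then k - 1 else k)"
  shows "L_T p c - avg_len N p (typeI_E N \<pi> c rb) Q =
           (1 - P_R p c rb ^ (N - 1)) / (1 - P_R p c rb ^ N) * P_R p c rb
         + (1 - P_R p c rb ^ M) / (1 - P_R p c rb ^ N) * (1 - P_R p c rb)
         - real k * (1 - P_R p c rb)"
proof -
  define r where "r = P_R p c rb"
  define SR where "SR = S_R c rb"
  have SL: "S_L c rb = - SR" unfolding SR_def S_L_def S_R_def by auto
  have rpos: "r > 0" unfolding r_def P_R_def using ne pos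
    by (metis SR_def finite sum_pos) 
  have r1: "r < 1" using rlt r_def by simp
  have sumSL: "(\<Sum>s\<in>-SR. p s) = 1 - r"
    using p1 sum.subset_diff[of SR UNIV p] unfolding r_def P_R_def SR_def
    by (simp add: Compl_eq_Diff_UNIV)
  have stY: "\<forall>y\<in>{1..N}. Q y = (\<Sum>x=1..N. Q x * (\<Sum>s\<in>{s. typeI_F N c rb x s = y}. p s))"
    using stat unfolding stationary_def by blast
  have step: "Q y = Q (y - 1) * r" if y: "y \<in> {2..N}" for y
  proof -
    have "\<forall>x\<in>{1..N}. Q x * (\<Sum>s\<in>{s. typeI_F N c rb x s = y}. p s) = (if x = y - 1 then Q x * r else 0)"
    proof
      fix x assume x: "x \<in> {1..N}"
      show "Q x * (\<Sum>s\<in>{s. typeI_F N c rb x s = y}. p s) = (if x = y - 1 then Q x * r else 0)"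
      proof (cases "x = y - 1")
        case True
        hence "{s. typeI_F N c rb x s = y} = SR" using y unfolding typeI_F_def SR_def by auto
        thus ?thesis using True unfolding r_def P_R_def SR_def by simp
      next
        case False
        hence "{s. typeI_F N c rb x s = y} = {}" using y unfolding typeI_F_def SR_def by auto
        thus ?thesis using False by simp
      qed
    qed
    hence "(\<Sum>x=1..N. Q x * (\<Sum>s\<in>{s. typeI_F N c rb x s = y}. p s)) = (\<Sum>x=1..N. (if x = y - 1 then Q x * r else 0))"
      by (intro sum.cong) auto
    also have "\<dots> = Q (y - 1) * r" using y by (subst sum.delta) auto
    finally have calc: "(\<Sum>x=1..N. Q x * (\<Sum>s\<in>{s. typeI_F N c rb x s = y}. p s)) = Q (y - 1) * r" .
    have e: "Q y = (\<Sum>x=1..N. Q x * (\<Sum>s\<in>{s. typeI_F N c rb x s = y}. p s))"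
      using y by (intro bspec[OF stY]) auto
    from e calc show ?thesis by (rule trans)
  qed
  have Qj: "\<forall>j. 1 \<le> j \<and> j \<le> N \<longrightarrow> Q j = r ^ (j - 1) * Q 1"
  proof
    fix j show "1 \<le> j \<and> j \<le> N \<longrightarrow> Q j = r ^ (j - 1) * Q 1"
    proof (induction j)
      case 0 then show ?case by simp
    next
      case (Suc j)
      show ?case
      proof
        assume a: "1 \<le> Suc j \<and> Suc j \<le> N"
        show "Q (Suc j) = r ^ (Suc j - 1) * Q 1"
        proof (cases "j = 0")
          case True thus ?thesis by simp
        next
          case False
          have ih: "Q j = r ^ (j - 1) * Q 1" using a False by (intro Suc.IH[THEN mp]) simp
          have st: "Q (Suc j) = Q j * r" using step[of "Suc j"] a False by simp
          have pw: "r ^ (Suc j - 1) = r ^ (j - 1) * r" using False by (cases j) auto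
          show ?thesis unfolding st ih pw by (simp add: algebra_simps)
        qed
      qed
    qed
  qed
  have geo: "(\<Sum>x=1..n. Q x) = Q 1 * ((1 - r ^ n) / (1 - r))" if "n \<le> N" for n
  proof -
    have "(\<Sum>x=1..n. Q x) = (\<Sum>x=1..n. r ^ (x - 1) * Q 1)"
      proof (intro sum.cong refl)
      fix x assume "x \<in> {1..n}"
      hence "1 \<le> x \<and> x \<le> N" using that by auto
      thus "Q x = r ^ (x - 1) * Q 1" using spec[OF Qj, of x] by blast
    qed
    also have "\<dots> = (\<Sum>i<n. r ^ i * Q 1)" by (rule shift_sum)
    also have "\<dots> = Q 1 * (\<Sum>i<n. r ^ i)" by (simp add: sum_distrib_left algebra_simps)
    also have "\<dots> = Q 1 * ((1 - r ^ n) / (1 - r))" using r1 by (simp add: sum_gp_strict)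
    finally show ?thesis .
  qed
  have rN: "r ^ N < 1" using rpos r1 N2 by (simp add: power_less_one_iff)
  have sQ: "(\<Sum>x=1..N. Q x) = 1" using stat unfolding stationary_def by blast
  have Q1e: "Q 1 * ((1 - r ^ N) / (1 - r)) = 1" by (metis geo order_refl sQ)
  have Q1: "Q 1 = (1 - r) / (1 - r ^ N)"
    using Q1e rN r1 by (simp add: field_simps)
  have QN: "Q N = r ^ (N - 1) * Q 1" using spec[OF Qj, of N] N2 by linarith
  have lenE: "real (length (typeI_E N \<pi> c rb x s)) = real (length (c s))
      + (if s \<in> SR then (if x < N then -1 else 0) else real (length (\<pi> x)))" for x s
  proof -
    have "length (c s) \<ge> 1" using ct unfolding code_tree_def by auto
    thus ?thesis unfolding typeI_E_def SR_def by (auto simp: of_nat_diff)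
  qed
  have inner: "(\<Sum>s\<in>UNIV. p s * Q x * real (length (typeI_E N \<pi> c rb x s)))
     = Q x * (L_T p c + ((if x < N then -r else 0) + (1 - r) * real (length (\<pi> x))))" for x
  proof -
    have "(\<Sum>s\<in>UNIV. p s * Q x * real (length (typeI_E N \<pi> c rb x s)))
      = Q x * ((\<Sum>s\<in>UNIV. p s * real (length (c s))) + (\<Sum>s\<in>UNIV. p s *
        (if s \<in> SR then (if x < N then -1 else 0) else real (length (\<pi> x)))))"
      unfolding lenE by (simp add: sum_distrib_left sum.distrib algebra_simps)
    also have "(\<Sum>s\<in>UNIV. p s *
        (if s \<in> SR then (if x < N then -1 else 0) else real (length (\<pi> x))))
       = (\<Sum>s\<in>SR. p s * (if x < N then -1 else 0)) + (\<Sum>s\<in>-SR. p s * real (length (\<pi> x)))"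
      by (simp add: if_distrib sum.If_cases Int_def Compl_eq)
    also have "\<dots> = (if x < N then -r else 0) + (1 - r) * real (length (\<pi> x))"
      using sumSL unfolding r_def P_R_def SR_def
      by (simp add: sum_distrib_right[symmetric] sum_negf)
    finally show ?thesis unfolding L_T_def by simp
  qed
  have avg: "avg_len N p (typeI_E N \<pi> c rb) Q
     = (\<Sum>x=1..N. Q x * (L_T p c + ((if x < N then -r else 0) + (1 - r) * real (length (\<pi> x)))))"
    unfolding avg_len_def inner ..
  have A: "(\<Sum>x=1..N. Q x * (if x < N then -r else 0)) = - r * (1 - Q N)"
  proof -
    have "(\<Sum>x=1..N. Q x * (if x < N then -r else 0)) = (\<Sum>x=1..N. -r * Q x + (if x = N then r * Q x else 0))"
      by (intro sum.cong) auto
    also have "\<dots> = (\<Sum>x=1..N. -r * Q x) + (\<Sum>x=1..N. if x = N then r * Q x else 0)"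
      by (rule sum.distrib)
    also have "\<dots> = -r * 1 + r * Q N" unfolding sum_distrib_left[symmetric] sQ using N2 by simp
    finally show ?thesis by (simp add: algebra_simps)
  qed
  have B: "(\<Sum>x=1..N. Q x * real (length (\<pi> x))) = real k - Q 1 * ((1 - r ^ M) / (1 - r))"
  proof -
    have "(\<Sum>x=1..N. Q x * real (length (\<pi> x))) = (\<Sum>x=1..N. real k * Q x - (if x \<le> M then Q x else 0))"
      using adm k1 by (intro sum.cong) (auto simp: of_nat_diff algebra_simps)
    also have "\<dots> = real k - (\<Sum>x\<in>{x\<in>{1..N}. x \<le> M}. Q x)"
      unfolding sum_subtractf sum_distrib_left[symmetric] sQ sum.inter_filter[OF finite_atLeastAtMost] by simp
    also have "{x\<in>{1..N}. x \<le> M} = {1..M}" using MN by auto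
    finally show ?thesis using geo[OF MN] by simp
  qed
  have "avg_len N p (typeI_E N \<pi> c rb) Q = L_T p c - r * (1 - Q N) + (1 - r) * (real k - Q 1 * ((1 - r ^ M) / (1 - r)))"
  proof -
    have "avg_len N p (typeI_E N \<pi> c rb) Q = (\<Sum>x=1..N. L_T p c * Q x + Q x * (if x < N then -r else 0) + (1 - r) * (Q x * real (length (\<pi> x))))"
      unfolding avg by (intro sum.cong) (auto simp: algebra_simps)
    also have "\<dots> = L_T p c * (\<Sum>x=1..N. Q x) + (\<Sum>x=1..N. Q x * (if x < N then -r else 0)) + (1 - r) * (\<Sum>x=1..N. Q x * real (length (\<pi> x)))"
      unfolding sum.distrib sum_distrib_left ..
    finally show ?thesis unfolding A B sQ by simp
  qed
  hence "L_T p c - avg_len N p (typeI_E N \<pi> c rb) Q = r * (1 - Q N) - (1 - r) * (real k - Q 1 * ((1 - r ^ M) / (1 - r)))"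
    by simp
  also have "\<dots> = (1 - r ^ (N - 1)) / (1 - r ^ N) * r + (1 - r ^ M) / (1 - r ^ N) * (1 - r) - real k * (1 - r)"
  proof -
    have rr: "r ^ N = r * r ^ (N - 1)" using N2 by (metis Suc_diff_1 le_trans one_le_numeral power_Suc linorder_not_le not_one_le_zero)
    show ?thesis unfolding QN Q1 rr using alg[of r "r ^ (N - 1)" k "r ^ M"] rN r1 rr by simp
  qed
  finally show ?thesis unfolding r_def .
qed
lemma n2val: fixes r :: real assumes "0 < r" "r < 1"
  shows "(1 - r ^ (2 - 1)) / (1 - r ^ 2) * r + (1 - r ^ (2 ^ 1 - 2)) / (1 - r ^ 2) * (1 - r) - real 1 * (1 - r)
    = (r ^ 2 + r - 1) / (1 + r)"
proof -
  have "1 - r ^ 2 = (1 - r) * (1 + r)" by (simp add: power2_eq_square algebra_simps)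
  hence "(1 - r) / (1 - r ^ 2) * r = r / (1 + r)" using assms by simp
  moreover have "r / (1 + r) - (1 - r) = (r ^ 2 + r - 1) / (1 + r)" using assms
    by (simp add: field_simps power2_eq_square)
  ultimately show ?thesis by simp
qed
lemma n2pos: fixes r :: real assumes "r > (sqrt 5 - 1) / 2"
  shows "(r ^ 2 + r - 1) / (1 + r) > 0"
proof -
  define a where "a = (sqrt 5 - 1) / 2"
  have s5: "sqrt 5 * sqrt 5 = 5" by simp
  have "a * a + a - 1 = 0" unfolding a_def using s5 by (simp add: field_simps)
  hence f: "r ^ 2 + r - 1 = (r - a) * (r + a + 1)" by (simp add: power2_eq_square algebra_simps)
  have a0: "a > 0" unfolding a_def by (simp add: real_less_rsqrt)
  have "r > a" using assms a_def by simp
  hence "(r - a) * (r + a + 1) > 0" using a0 by simp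
  moreover have "1 + r > 0" using a0 \<open>r > a\<close> by simp
  ultimately show ?thesis using f by simp
qed
lemma kN_facts:
  assumes "N \<ge> 2"
  shows "kN N \<ge> 1" "N \<le> 2 ^ kN N" "2 ^ (kN N - 1) < N"
proof -
  have lg: "log 2 (real N) > 0" using assms by simp
  define k where "k = kN N"
  have ci: "\<lceil>log 2 (real N)\<rceil> \<ge> 1" using lg by (simp add: ceiling_le_iff le_ceiling_iff)
  hence kr: "real k = of_int \<lceil>log 2 (real N)\<rceil>" unfolding k_def kN_def by simp
  have k1: "k \<ge> 1" using ci unfolding k_def kN_def by linarith
  have a: "log 2 (real N) \<le> real k" using kr by linarith
  have b: "real k - 1 < log 2 (real N)" using kr by linarith
  have "real N \<le> 2 powr real k" using a assms by (simp add: log_le_iff)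
  hence "real N \<le> 2 ^ k" by (simp add: powr_realpow)
  hence c: "N \<le> 2 ^ k" by (metis of_nat_le_iff of_nat_numeral of_nat_power)
  have "real (k - 1) < log 2 (real N)" using b k1 by (simp add: of_nat_diff)
  hence "2 powr real (k - 1) < real N" using assms by (simp add: less_log_iff)
  hence "2 ^ (k - 1) < real N" by (simp add: powr_realpow)
  hence d: "2 ^ (k - 1) < N" by (metis of_nat_less_iff of_nat_numeral of_nat_power)
  show "kN N \<ge> 1" "N \<le> 2 ^ kN N" "2 ^ (kN N - 1) < N" using k1 c d k_def by auto
qed

theorem theorem1:
  fixes p :: "'a::finite \<Rightarrow> real" and c :: "'a \<Rightarrow> bool list" and rb :: bool
    and N :: nat and \<pi> :: "nat \<Rightarrow> bool list" and Q :: "nat \<Rightarrow> real"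
  assumes "card (UNIV :: 'a set) \<ge> 2"
    and "\<forall>s. p s > 0" and "(\<Sum>s\<in>UNIV. p s) = 1"
    and "code_tree c"
    and "S_R c rb \<noteq> {}" and "S_L c rb \<noteq> {}"
    and "1/2 \<le> P_R p c rb" and "P_R p c rb < 1"
    and "N \<ge> 2"
    and "admissible_pi N \<pi>"
    and "stationary N p (typeI_F N c rb) Q"
  shows "L_T p c - avg_len N p (typeI_E N \<pi> c rb) Q =
           (1 - P_R p c rb ^ (N - 1)) / (1 - P_R p c rb ^ N) * P_R p c rb
         + (1 - P_R p c rb ^ (2 ^ kN N - N)) / (1 - P_R p c rb ^ N) * (1 - P_R p c rb)
         - real (kN N) * (1 - P_R p c rb)
    \<and> (N = 2 \<longrightarrow>
         max (L_T p c - avg_len N p (typeI_E N \<pi> c rb) Q) 0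
           = max ((P_R p c rb ^ 2 + P_R p c rb - 1) / (1 + P_R p c rb)) 0
       \<and> (P_R p c rb > (sqrt 5 - 1) / 2 \<longrightarrow>
            max (L_T p c - avg_len N p (typeI_E N \<pi> c rb) Q) 0 > 0))"
  proof -
  define r where "r = P_R p c rb"
  define k where "k = kN N"
  define M where "M = 2 ^ k - N"
  have kf: "k \<ge> 1" "N \<le> 2 ^ k" "2 ^ (k - 1) < N" using kN_facts[OF assms(9)] k_def by auto
  have "(2::nat) ^ k = 2 * 2 ^ (k - 1)" using kf(1) by (metis Suc_diff_1 less_le_trans zero_less_one power_Suc)
  hence MN: "M \<le> N" using kf M_def by linarith
  have adm: "\<forall>j\<in>{1..N}. length (\<pi> j) = (if j \<le> M then k - 1 else k)"
    using assms(10) unfolding admissible_pi_def M_def k_def by blast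
  have rpos: "r > 0" unfolding r_def P_R_def using assms(5,2)
    by (intro sum_pos) auto
  have eq: "L_T p c - avg_len N p (typeI_E N \<pi> c rb) Q =
           (1 - r ^ (N - 1)) / (1 - r ^ N) * r
         + (1 - r ^ M) / (1 - r ^ N) * (1 - r)
         - real k * (1 - r)"
    unfolding r_def by (rule main[OF assms(2,3,4,5,8,9,11) kf(1) k_def MN M_def adm])
  show ?thesis
  proof (intro conjI impI)
    show "L_T p c - avg_len N p (typeI_E N \<pi> c rb) Q =
           (1 - P_R p c rb ^ (N - 1)) / (1 - P_R p c rb ^ N) * P_R p c rb
         + (1 - P_R p c rb ^ (2 ^ kN N - N)) / (1 - P_R p c rb ^ N) * (1 - P_R p c rb)
         - real (kN N) * (1 - P_R p c rb)" using eq unfolding r_def M_def k_def .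
  next
    assume N2: "N = 2"
    have "2 ^ (k - 1) < (2::nat)" using kf(3) N2 by simp
    hence "k - 1 = 0" by (cases "k - 1") auto
    hence k1: "k = 1" using kf(1) by simp
    have val: "L_T p c - avg_len N p (typeI_E N \<pi> c rb) Q = (r ^ 2 + r - 1) / (1 + r)"
      using eq n2val[OF rpos] assms(8) unfolding M_def k1 N2 r_def by simp
    show "max (L_T p c - avg_len N p (typeI_E N \<pi> c rb) Q) 0
           = max ((P_R p c rb ^ 2 + P_R p c rb - 1) / (1 + P_R p c rb)) 0"
      using val r_def by simp
    assume "P_R p c rb > (sqrt 5 - 1) / 2"
    thus "max (L_T p c - avg_len N p (typeI_E N \<pi> c rb) Q) 0 > 0"
      using val n2pos r_def by simp
  qed
qed

end
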